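(* Let $K>0$ and $V(x)=Ke^{2ix}$. Then for every $x\in(0,\pi)$, every $j\in\mathbb{N}$, $k\in\mathbb{N}_0$ and $m\in\mathbb{N}_0$, we have $\mu_j(x)\ne E_m$ and $\nu_k(x)\ne E_m$.
   Context: For $x_0\in\mathbb{R}$, let $c(\lambda,x_0,\cdot)$, $s(\lambda,x_0,\cdot)$ be the solutions of $-\psi''(x)+Ke^{2ix}\psi(x)=\lambda\psi(x)$ with $c(\lambda,x_0,x_0)=1$, $c'(\lambda,x_0,x_0)=0$, $s(\lambda,x_0,x_0)=0$, $s'(\lambda,x_0,x_0)=1$. The Dirichlet eigenvalues $\mu_j(x_0)$, $j\in\mathbb{N}$, are the zeros of $\lambda\mapsto s(\lambda,x_0,x_0+\pi)$ and the Neumann eigenvalues $\nu_k(x_0)$, $k\in\mathbb{N}_0$, are the zeros of $\lambda\mapsto c'(\lambda,x_0,x_0+\pi)$, each listed with multiplicity in order of non-decreasing modulus. The numbers $E_m$, $m\in\mathbb{N}_0$, are the zeros of $\Delta(\lambda)^2-1$ with $\Delta$ the Floquet discriminant; for this potential $\Delta(\lambda)=\cos(\pi\sqrt\lambda)$, so $E_0=0$ and $E_{2m-1}=E_{2m}=m^2$, $m\in\mathbb{N}$. *)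

theory Defs
  imports "HOL-Analysis.Analysis"
begin

definition pot :: "real \<Rightarrow> real \<Rightarrow> complex" where
  "pot K x = complex_of_real K * exp (2 * \<i> * complex_of_real x)"

definition is_sol :: "real \<Rightarrow> complex \<Rightarrow> (real \<Rightarrow> complex) \<Rightarrow> bool" where
  "is_sol K lam psi \<longleftrightarrow>
     (\<exists>psi'. \<forall>t. (psi has_vector_derivative psi' t) (at t) \<and>
                 (psi' has_vector_derivative ((pot K t - lam) * psi t)) (at t))"

definition csol :: "real \<Rightarrow> complex \<Rightarrow> real \<Rightarrow> real \<Rightarrow> complex" where
  "csol K lam x0 = (THE psi. is_sol K lam psi \<and> psi x0 = 1 \<and>
                      vector_derivative psi (at x0) = 0)"

definition ssol :: "real \<Rightarrow> complex \<Rightarrow> real \<Rightarrow> real \<Rightarrow> complex" where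
  "ssol K lam x0 = (THE psi. is_sol K lam psi \<and> psi x0 = 0 \<and>
                      vector_derivative psi (at x0) = 1)"

definition dirichlet_ev :: "real \<Rightarrow> real \<Rightarrow> complex \<Rightarrow> bool" where
  "dirichlet_ev K x0 lam \<longleftrightarrow> ssol K lam x0 (x0 + pi) = 0"

definition neumann_ev :: "real \<Rightarrow> real \<Rightarrow> complex \<Rightarrow> bool" where
  "neumann_ev K x0 lam \<longleftrightarrow> vector_derivative (csol K lam x0) (at (x0 + pi)) = 0"

definition floquet_disc :: "real \<Rightarrow> complex \<Rightarrow> complex" where
  "floquet_disc K lam = (csol K lam 0 pi + vector_derivative (ssol K lam 0) (at pi)) / 2"

text \<open>The numbers E_m: zeros of Delta^2 - 1.\<close>
definition periodic_ev :: "real \<Rightarrow> complex \<Rightarrow> bool" where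
  "periodic_ev K lam \<longleftrightarrow> (floquet_disc K lam)^2 - 1 = 0"

end

theory Submission
  imports Defs "HOL-Complex_Analysis.Complex_Analysis"
begin

definition fser :: "(nat \<Rightarrow> complex) \<Rightarrow> complex \<Rightarrow> complex" where
  "fser c w = (\<Sum>n. c n * w ^ n)"

definition entire_c :: "(nat \<Rightarrow> complex) \<Rightarrow> bool" where
  "entire_c c \<longleftrightarrow> (\<forall>z. summable (\<lambda>n. c n * z ^ n))"

definition shc :: "(nat \<Rightarrow> complex) \<Rightarrow> nat \<Rightarrow> complex" where
  "shc c n = (if n = 0 then 0 else c (n - 1))"

definition shk :: "nat \<Rightarrow> (nat \<Rightarrow> complex) \<Rightarrow> nat \<Rightarrow> complex" where
  "shk k c n = (if k \<le> n then c (n - k) else 0)"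

lemma entire_sums: "entire_c c \<Longrightarrow> (\<lambda>n. c n * z ^ n) sums fser c z"
  unfolding entire_c_def fser_def using summable_sums by blast

lemma entire_add: "entire_c c \<Longrightarrow> entire_c d \<Longrightarrow> entire_c (\<lambda>n. c n + d n)"
  unfolding entire_c_def by (auto simp: distrib_right intro: summable_add)

lemma entire_cmult: "entire_c c \<Longrightarrow> entire_c (\<lambda>n. a * c n)"
  unfolding entire_c_def by (auto simp: mult.assoc intro: summable_mult)

lemma fser_add: "entire_c c \<Longrightarrow> entire_c d \<Longrightarrow> fser (\<lambda>n. c n + d n) z = fser c z + fser d z"
  unfolding fser_def entire_c_def by (simp add: distrib_right suminf_add)

lemma fser_cmult: "entire_c c \<Longrightarrow> fser (\<lambda>n. a * c n) z = a * fser c z"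
  unfolding fser_def entire_c_def by (simp add: mult.assoc suminf_mult)

lemma fser_cong: "(\<And>n. c n = d n) \<Longrightarrow> fser c z = fser d z"
  by (simp add: fser_def)

lemma entire_cong: "(\<And>n. c n = d n) \<Longrightarrow> entire_c c = entire_c d"
  by (simp add: entire_c_def)

lemma fser_zero: "fser c 0 = c 0"
  by (simp add: fser_def)

lemma entire_diffs: "entire_c c \<Longrightarrow> entire_c (diffs c)"
  unfolding entire_c_def by (blast intro: termdiff_converges_all)

lemma fser_deriv: "entire_c c \<Longrightarrow> (fser c has_field_derivative fser (diffs c) z) (at z)"
  unfolding entire_c_def fser_def
  by (rule termdiffs_strong_converges_everywhere) auto

lemma shc_sums:
  assumes "entire_c c"
  shows "(\<lambda>n. shc c n * z ^ n) sums (z * fser c z)"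
proof -
  have "(\<lambda>n. z * (c n * z ^ n)) sums (z * fser c z)"
    using entire_sums[OF assms] by (rule sums_mult)
  then have "(\<lambda>n. shc c (Suc n) * z ^ (Suc n)) sums (z * fser c z)"
    by (simp add: shc_def mult_ac)
  then show ?thesis using sums_Suc_iff[of "\<lambda>n. shc c n * z ^ n"] by (simp add: shc_def)
qed

lemma entire_shc: "entire_c c \<Longrightarrow> entire_c (shc c)"
  using shc_sums unfolding entire_c_def sums_iff by blast

lemma fser_shc: "entire_c c \<Longrightarrow> fser (shc c) z = z * fser c z"
  using shc_sums unfolding fser_def sums_iff by blast

lemma shk_sums:
  assumes "entire_c c"
  shows "(\<lambda>n. shk k c n * z ^ n) sums (z ^ k * fser c z)"
proof -
  have "(\<lambda>n. z ^ k * (c n * z ^ n)) sums (z ^ k * fser c z)"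
    using entire_sums[OF assms] by (rule sums_mult)
  then have "(\<lambda>n. shk k c (n + k) * z ^ (n + k)) sums (z ^ k * fser c z)"
    by (simp add: shk_def mult_ac power_add)
  then show ?thesis by (subst (asm) sums_zero_iff_shift) (auto simp: shk_def)
qed

lemma entire_shk: "entire_c c \<Longrightarrow> entire_c (shk k c)"
  using shk_sums unfolding entire_c_def sums_iff by blast

lemma fser_shk: "entire_c c \<Longrightarrow> fser (shk k c) z = z ^ k * fser c z"
  using shk_sums unfolding fser_def sums_iff by blast

lemma theta_sums:
  assumes "entire_c c"
  shows "(\<lambda>n. (of_nat n * c n) * z ^ n) sums (z * fser (diffs c) z)"
proof -
  have "(\<lambda>n. z * (diffs c n * z ^ n)) sums (z * fser (diffs c) z)"
    using entire_sums[OF entire_diffs[OF assms]] by (rule sums_mult)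
  then have "(\<lambda>n. (of_nat (Suc n) * c (Suc n)) * z ^ (Suc n)) sums (z * fser (diffs c) z)"
    by (simp add: diffs_def mult_ac)
  then show ?thesis using sums_Suc_iff[of "\<lambda>n. (of_nat n * c n) * z ^ n"] by simp
qed

lemma entire_theta: "entire_c c \<Longrightarrow> entire_c (\<lambda>n. of_nat n * c n)"
  using theta_sums unfolding entire_c_def sums_iff by blast

lemma fser_theta: "entire_c c \<Longrightarrow> fser (\<lambda>n. of_nat n * c n) z = z * fser (diffs c) z"
  using theta_sums unfolding fser_def sums_iff by blast

definition fl :: "complex \<Rightarrow> (nat \<Rightarrow> complex) \<Rightarrow> real \<Rightarrow> complex" where
  "fl \<kappa> c t = exp (\<i> * \<kappa> * of_real t) * fser c (exp (2 * \<i> * of_real t))"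

definition Dc :: "complex \<Rightarrow> (nat \<Rightarrow> complex) \<Rightarrow> nat \<Rightarrow> complex" where
  "Dc \<kappa> c n = \<i> * (\<kappa> + 2 * of_nat n) * c n"

lemma Dc_split: "Dc \<kappa> c n = (\<i> * \<kappa>) * c n + (2 * \<i>) * (of_nat n * c n)"
  by (simp add: Dc_def algebra_simps)

lemma entire_Dc: "entire_c c \<Longrightarrow> entire_c (Dc \<kappa> c)"
  by (subst entire_cong[OF Dc_split]) (intro entire_add entire_cmult entire_theta)

lemma fser_Dc: "entire_c c \<Longrightarrow> fser (Dc \<kappa> c) w = \<i> * \<kappa> * fser c w + 2 * \<i> * (w * fser (diffs c) w)"
  apply (subst fser_cong[OF Dc_split])
  apply (subst fser_add)
    apply (intro entire_cmult entire_theta; assumption)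
   apply (intro entire_cmult entire_theta; assumption)
  apply (simp add: fser_cmult entire_theta fser_theta)
  done

lemma exp_lin_deriv:
  fixes a :: complex
  shows
  "((\<lambda>t::real. exp (a * of_real t)) has_vector_derivative (a * exp (a * of_real t))) (at t)"
proof -
  have "((\<lambda>z. exp (a * z)) has_field_derivative (a * exp (a * of_real t))) (at (of_real t))"
    by (auto intro!: derivative_eq_intros)
  then show ?thesis by (rule has_vector_derivative_real_field)
qed

lemma fl_deriv:
  assumes "entire_c c"
  shows "(fl \<kappa> c has_vector_derivative fl \<kappa> (Dc \<kappa> c) t) (at t)"
proof -
  let ?g = "\<lambda>t::real. exp (2 * \<i> * of_real t)"
  have g: "(?g has_vector_derivative (2 * \<i> * ?g t)) (at t)"
    using exp_lin_deriv[of "2 * \<i>" t] by simp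
  have F: "((fser c \<circ> ?g) has_vector_derivative (2 * \<i> * ?g t * fser (diffs c) (?g t))) (at t)"
    by (rule field_vector_diff_chain_at[OF g fser_deriv[OF assms]])
  have E: "((\<lambda>t::real. exp (\<i> * \<kappa> * of_real t)) has_vector_derivative (\<i> * \<kappa> * exp (\<i> * \<kappa> * of_real t))) (at t)"
    using exp_lin_deriv[of "\<i> * \<kappa>" t] by simp
  have "((\<lambda>t. exp (\<i> * \<kappa> * of_real t) * (fser c \<circ> ?g) t) has_vector_derivative
     (exp (\<i> * \<kappa> * of_real t) * (2 * \<i> * ?g t * fser (diffs c) (?g t)) + \<i> * \<kappa> * exp (\<i> * \<kappa> * of_real t) * (fser c \<circ> ?g) t)) (at t)"
    by (rule has_vector_derivative_mult[OF E F])
  moreover have "exp (\<i> * \<kappa> * of_real t) * (2 * \<i> * ?g t * fser (diffs c) (?g t)) + \<i> * \<kappa> * exp (\<i> * \<kappa> * of_real t) * (fser c \<circ> ?g) t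
      = fl \<kappa> (Dc \<kappa> c) t"
    unfolding fl_def fser_Dc[OF assms] by (simp add: algebra_simps)
  ultimately show ?thesis unfolding fl_def o_def by simp
qed

lemma fl_shift_pi: "fl \<kappa> c (t + pi) = exp (\<i> * \<kappa> * pi) * fl \<kappa> c t"
proof -
  have "exp (2 * \<i> * of_real (t + pi)) = exp (2 * \<i> * of_real t)"
  proof -
    have "exp (2 * \<i> * of_real (t + pi)) = exp (2 * \<i> * of_real t) * exp (2 * pi * \<i>)"
      by (simp add: distrib_left exp_add mult_ac)
    then show ?thesis by simp
  qed
  moreover have "exp (\<i> * \<kappa> * of_real (t + pi)) = exp (\<i> * \<kappa> * pi) * exp (\<i> * \<kappa> * of_real t)"
    by (simp add: distrib_left exp_add mult_ac)
  ultimately show ?thesis by (simp add: fl_def)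
qed

lemma fl_add: "entire_c c \<Longrightarrow> entire_c d \<Longrightarrow> fl \<kappa> (\<lambda>n. c n + d n) t = fl \<kappa> c t + fl \<kappa> d t"
  by (simp add: fl_def fser_add distrib_left)

lemma fl_cmult: "entire_c c \<Longrightarrow> fl \<kappa> (\<lambda>n. a * c n) t = a * fl \<kappa> c t"
  by (simp add: fl_def fser_cmult)

lemma fl_cong: "(\<And>n. c n = d n) \<Longrightarrow> fl \<kappa> c t = fl \<kappa> d t"
  by (simp add: fl_def fser_def)

definition Rc :: "real \<Rightarrow> complex \<Rightarrow> (nat \<Rightarrow> complex) \<Rightarrow> nat \<Rightarrow> complex" where
  "Rc K \<kappa> c n = 4 * of_nat n * (of_nat n + \<kappa>) * c n + of_real K * shc c n"

lemma pot_exp: "pot K t = of_real K * exp (2 * \<i> * of_real t)"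
  by (simp add: pot_def)

lemma fl_residual:
  assumes "entire_c c"
  shows "fl \<kappa> (Dc \<kappa> (Dc \<kappa> c)) t - (pot K t - \<kappa>^2) * fl \<kappa> c t = - fl \<kappa> (Rc K \<kappa> c) t"
proof -
  let ?w = "exp (2 * \<i> * of_real t)"
  have eq: "Dc \<kappa> (Dc \<kappa> c) n = (- (\<kappa>^2)) * c n + (-1) * Rc K \<kappa> c n + of_real K * shc c n" for n
    by (simp add: Dc_def Rc_def algebra_simps power2_eq_square)
  have e1: "entire_c (Rc K \<kappa> c)"
    unfolding Rc_def
    apply (rule entire_add)
     apply (subst entire_cong[where d = "\<lambda>n. 4 * (of_nat n * (of_nat n * c n)) + 4 * \<kappa> * (of_nat n * c n)"])
      apply (simp add: algebra_simps)
     apply (intro entire_add entire_cmult entire_theta assms)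
    apply (intro entire_cmult entire_shc assms)
    done
  have "fl \<kappa> (Dc \<kappa> (Dc \<kappa> c)) t = (- (\<kappa>^2)) * fl \<kappa> c t + (-1) * fl \<kappa> (Rc K \<kappa> c) t + of_real K * fl \<kappa> (shc c) t"
  proof -
    have s1: "entire_c (shc c)" by (rule entire_shc[OF assms])
    have "fl \<kappa> (Dc \<kappa> (Dc \<kappa> c)) t = fl \<kappa> (\<lambda>n. ((- (\<kappa>^2)) * c n + (-1) * Rc K \<kappa> c n) + of_real K * shc c n) t"
      by (rule fl_cong[OF eq])
    also have "\<dots> = fl \<kappa> (\<lambda>n. (- (\<kappa>^2)) * c n + (-1) * Rc K \<kappa> c n) t + fl \<kappa> (\<lambda>n. of_real K * shc c n) t"
      by (rule fl_add) (intro entire_add entire_cmult assms e1 s1)+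
    also have "fl \<kappa> (\<lambda>n. (- (\<kappa>^2)) * c n + (-1) * Rc K \<kappa> c n) t = fl \<kappa> (\<lambda>n. (- (\<kappa>^2)) * c n) t + fl \<kappa> (\<lambda>n. (-1) * Rc K \<kappa> c n) t"
      by (rule fl_add) (intro entire_add entire_cmult assms e1 s1)+
    finally show ?thesis by (simp only: fl_cmult[OF assms] fl_cmult[OF e1] fl_cmult[OF s1])
  qed
  moreover have "fl \<kappa> (shc c) t = ?w * fl \<kappa> c t"
    by (simp add: fl_def fser_shc assms)
  ultimately show ?thesis by (simp add: pot_exp algebra_simps)
qed

definition sol :: "real \<Rightarrow> complex \<Rightarrow> (real \<Rightarrow> complex) \<Rightarrow> (real \<Rightarrow> complex) \<Rightarrow> bool" where
  "sol K lam y y' \<longleftrightarrow> (\<forall>t. (y has_vector_derivative y' t) (at t) \<and>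
       (y' has_vector_derivative ((pot K t - lam) * y t)) (at t))"

lemma sol_lin:
  assumes "sol K lam y y'" "sol K lam z z'"
  shows "sol K lam (\<lambda>t. a * y t + b * z t) (\<lambda>t. a * y' t + b * z' t)"
  unfolding sol_def
proof
  fix t
  have 1: "(y has_vector_derivative y' t) (at t)" "(y' has_vector_derivative ((pot K t - lam) * y t)) (at t)"
    "(z has_vector_derivative z' t) (at t)" "(z' has_vector_derivative ((pot K t - lam) * z t)) (at t)"
    using assms unfolding sol_def by auto
  show "((\<lambda>t. a * y t + b * z t) has_vector_derivative a * y' t + b * z' t) (at t) \<and>
        ((\<lambda>t. a * y' t + b * z' t) has_vector_derivative (pot K t - lam) * (a * y t + b * z t)) (at t)"
  proof
    show "((\<lambda>t. a * y t + b * z t) has_vector_derivative a * y' t + b * z' t) (at t)"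
      by (intro has_vector_derivative_add has_vector_derivative_mult_right 1)
    have "((\<lambda>t. a * y' t + b * z' t) has_vector_derivative a * ((pot K t - lam) * y t) + b * ((pot K t - lam) * z t)) (at t)"
      by (intro has_vector_derivative_add has_vector_derivative_mult_right 1)
    then show "((\<lambda>t. a * y' t + b * z' t) has_vector_derivative (pot K t - lam) * (a * y t + b * z t)) (at t)"
      by (simp add: algebra_simps)
  qed
qed

lemma norm_pot: "norm (pot K t) = \<bar>K\<bar>"
  by (simp add: pot_def norm_mult)

lemma sol_unique0:
  assumes S: "sol K lam y y'" and y0: "y t0 = 0" and y0': "y' t0 = 0"
  shows "y t = 0"
proof -
  define L where "L = \<bar>K\<bar> + norm lam"
  define C where "C = 1 + L"
  have L0: "L \<ge> 0" by (simp add: L_def)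
  define q where "q t = pot K t - lam" for t
  have qb: "norm (q s) \<le> L" for s
    unfolding q_def L_def using norm_triangle_ineq4[of "pot K s" lam] norm_pot[of K s] by simp
  define E where "E s = Re (y s * cnj (y s) + y' s * cnj (y' s))" for s
  have Eeq: "E s = (norm (y s))^2 + (norm (y' s))^2" for s
    unfolding E_def using complex_norm_square[of "y s"] complex_norm_square[of "y' s"]
    by (metis Re_complex_of_real plus_complex.sel(1))
  define D where "D s = Re (y s * cnj (y' s) + y' s * cnj (y s) + (y' s * cnj (q s * y s) + q s * y s * cnj (y' s)))" for s
  have dE: "(E has_real_derivative D s) (at s)" for s
  proof -
    have 1: "(y has_vector_derivative y' s) (at s)" "(y' has_vector_derivative (q s * y s)) (at s)"
      using S unfolding sol_def q_def by auto
    have "((\<lambda>s. y s * cnj (y s) + y' s * cnj (y' s)) has_vector_derivative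
       (y s * cnj (y' s) + y' s * cnj (y s) + (y' s * cnj (q s * y s) + q s * y s * cnj (y' s)))) (at s)"
      by (intro has_vector_derivative_add has_vector_derivative_mult has_vector_derivative_cnj 1)
    from bounded_linear.has_vector_derivative[OF bounded_linear_Re this]
    show ?thesis unfolding E_def D_def by (simp add: has_real_derivative_iff_has_vector_derivative)
  qed
  have Db: "\<bar>D s\<bar> \<le> C * E s" for s
  proof -
    let ?a = "norm (y s)" and ?b = "norm (y' s)"
    have "\<bar>D s\<bar> \<le> norm (y s * cnj (y' s) + y' s * cnj (y s) + (y' s * cnj (q s * y s) + q s * y s * cnj (y' s)))"
      unfolding D_def by (rule abs_Re_le_cmod)
    also have "\<dots> \<le> ?a * ?b + ?b * ?a + (?b * (norm (q s) * ?a) + norm (q s) * ?a * ?b)"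
      by (rule order_trans[OF norm_triangle_ineq], rule add_mono,
          rule order_trans[OF norm_triangle_ineq], simp add: norm_mult,
          rule order_trans[OF norm_triangle_ineq], simp add: norm_mult)
    also have "\<dots> = 2 * ?a * ?b + 2 * norm (q s) * ?a * ?b" by (simp add: algebra_simps)
    also have "\<dots> \<le> 2 * ?a * ?b + 2 * L * ?a * ?b"
      using qb[of s] by (intro add_left_mono mult_right_mono) auto
    also have "\<dots> \<le> (?a^2 + ?b^2) + L * (?a^2 + ?b^2)"
    proof -
      have "2 * ?a * ?b \<le> ?a^2 + ?b^2" using sum_squares_bound[of ?a ?b] by (simp add: algebra_simps)
      moreover then have "L * (2 * ?a * ?b) \<le> L * (?a^2 + ?b^2)" using L0 by (simp add: mult_left_mono)
      ultimately show ?thesis by (simp add: algebra_simps)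
    qed
    also have "\<dots> = C * E s" by (simp add: C_def Eeq algebra_simps)
    finally show ?thesis .
  qed
  have E0: "E t0 = 0" using y0 y0' by (simp add: Eeq)
  have Enn: "E s \<ge> 0" for s by (simp add: Eeq)
  have "E t = 0"
  proof (cases "t0 \<le> t")
    case True
    define G where "G s = E s * exp (- C * s)" for s
    have "G t0 \<ge> G t"
    proof (rule DERIV_nonpos_imp_nonincreasing[OF True])
      fix s
      have "(G has_real_derivative (D s * exp (- C * s) + E s * (exp (- C * s) * (- C)))) (at s)"
        unfolding G_def by (intro derivative_eq_intros) (auto intro: dE)
      moreover have "D s * exp (- C * s) + E s * (exp (- C * s) * (- C)) \<le> 0"
      proof -
        have "D s - C * E s \<le> 0" using Db[of s] by linarith
        then have "(D s - C * E s) * exp (- C * s) \<le> 0" by (simp add: mult_nonpos_nonneg)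
        then show ?thesis by (simp add: algebra_simps)
      qed
      ultimately show "\<exists>y. (G has_real_derivative y) (at s) \<and> y \<le> 0" by blast
    qed
    then have "E t * exp (- C * t) \<le> 0" using E0 by (simp add: G_def)
    then have "E t \<le> 0" by (simp add: mult_le_0_iff)
    then show ?thesis using Enn[of t] by linarith
  next
    case False
    then have tt: "t \<le> t0" by linarith
    define G where "G s = E s * exp (C * s)" for s
    have "G t \<le> G t0"
    proof (rule DERIV_nonneg_imp_nondecreasing[OF tt])
      fix s
      have "(G has_real_derivative (D s * exp (C * s) + E s * (exp (C * s) * C))) (at s)"
        unfolding G_def by (intro derivative_eq_intros) (auto intro: dE)
      moreover have "D s * exp (C * s) + E s * (exp (C * s) * C) \<ge> 0"
      proof -
        have "D s + C * E s \<ge> 0" using Db[of s] by linarith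
        then have "(D s + C * E s) * exp (C * s) \<ge> 0" by simp
        then show ?thesis by (simp add: algebra_simps)
      qed
      ultimately show "\<exists>y. (G has_real_derivative y) (at s) \<and> y \<ge> 0" by blast
    qed
    then have "E t * exp (C * t) \<le> 0" using E0 by (simp add: G_def)
    then have "E t \<le> 0" by (simp add: mult_le_0_iff)
    then show ?thesis using Enn[of t] by linarith
  qed
  then show ?thesis using Eeq[of t] by (simp add: add_nonneg_eq_0_iff)
qed

lemma sol_vd: "sol K lam y y' \<Longrightarrow> vector_derivative y (at t) = y' t"
  unfolding sol_def by (blast intro: vector_derivative_at)

lemma is_sol_I: "sol K lam y y' \<Longrightarrow> is_sol K lam y"
  unfolding sol_def is_sol_def by blast

lemma is_sol_D: "is_sol K lam y \<Longrightarrow> sol K lam y (\<lambda>t. vector_derivative y (at t))"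
proof -
  assume "is_sol K lam y"
  then obtain y' where y': "\<forall>t. (y has_vector_derivative y' t) (at t) \<and>
                 (y' has_vector_derivative ((pot K t - lam) * y t)) (at t)"
    unfolding is_sol_def by blast
  then have vd: "\<And>t. vector_derivative y (at t) = y' t" by (auto intro: vector_derivative_at)
  show ?thesis unfolding sol_def vd using y' by simp
qed

lemma sol_eq_data:
  assumes "sol K lam y y'" "sol K lam z z'" "y x0 = z x0" "y' x0 = z' x0"
  shows "y = z"
proof
  fix t
  have "sol K lam (\<lambda>t. 1 * y t + (-1) * z t) (\<lambda>t. 1 * y' t + (-1) * z' t)"
    by (rule sol_lin[OF assms(1,2)])
  from sol_unique0[OF this, of x0 t] assms(3,4) show "y t = z t" by simp
qed

lemma csol_eq:
  assumes "sol K lam y y'" "y x0 = 1" "y' x0 = 0"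
  shows "csol K lam x0 = y"
  unfolding csol_def
proof (rule the_equality)
  show "is_sol K lam y \<and> y x0 = 1 \<and> vector_derivative y (at x0) = 0"
    using assms is_sol_I sol_vd by metis
next
  fix psi assume "is_sol K lam psi \<and> psi x0 = 1 \<and> vector_derivative psi (at x0) = 0"
  then show "psi = y" using is_sol_D sol_eq_data assms by metis
qed

lemma ssol_eq:
  assumes "sol K lam y y'" "y x0 = 0" "y' x0 = 1"
  shows "ssol K lam x0 = y"
  unfolding ssol_def
proof (rule the_equality)
  show "is_sol K lam y \<and> y x0 = 0 \<and> vector_derivative y (at x0) = 1"
    using assms is_sol_I sol_vd by metis
next
  fix psi assume "is_sol K lam psi \<and> psi x0 = 0 \<and> vector_derivative psi (at x0) = 1"
  then show "psi = y" using is_sol_D sol_eq_data assms by metis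
qed

lemma sol_dep:
  assumes U: "sol K lam u u'" and V: "sol K lam v v'"
    and W: "u x * v' x - u' x * v x = 0" and nz: "\<not> (u x = 0 \<and> u' x = 0)"
  shows "\<exists>c. \<forall>t. v t = c * u t"
proof (cases "u x = 0")
  case False
  define c where "c = v x / u x"
  have "sol K lam (\<lambda>t. c * u t + 0 * v t) (\<lambda>t. c * u' t + 0 * v' t)" by (rule sol_lin[OF U V])
  then have S: "sol K lam (\<lambda>t. c * u t) (\<lambda>t. c * u' t)" by simp
  have "v' x = c * u' x" using W False unfolding c_def by (simp add: field_simps)
  moreover have "v x = c * u x" using False unfolding c_def by simp
  ultimately have "v = (\<lambda>t. c * u t)" using sol_eq_data[OF V S] by metis
  then show ?thesis by metis
next
  case True
  then have u': "u' x \<noteq> 0" using nz by simp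
  define c where "c = v' x / u' x"
  have "sol K lam (\<lambda>t. c * u t + 0 * v t) (\<lambda>t. c * u' t + 0 * v' t)" by (rule sol_lin[OF U V])
  then have S: "sol K lam (\<lambda>t. c * u t) (\<lambda>t. c * u' t)" by simp
  have "v x = 0" using W True u' by simp
  then have "v x = c * u x" using True by simp
  moreover have "v' x = c * u' x" using u' unfolding c_def by simp
  ultimately have "v = (\<lambda>t. c * u t)" using sol_eq_data[OF V S] by metis
  then show ?thesis by metis
qed

fun acoef :: "real \<Rightarrow> complex \<Rightarrow> nat \<Rightarrow> complex" where
  "acoef K \<nu> 0 = 1"
| "acoef K \<nu> (Suc n) = - of_real K * acoef K \<nu> n / (4 * of_nat (Suc n) * (of_nat (Suc n) + \<nu>))"

lemma acoef_rec':
  assumes "of_nat (Suc n) + \<nu> \<noteq> 0"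
  shows "4 * of_nat (Suc n) * (of_nat (Suc n) + \<nu>) * acoef K \<nu> (Suc n) = - of_real K * acoef K \<nu> n"
proof -
  have d: "4 * of_nat (Suc n) * (of_nat (Suc n) + \<nu>) \<noteq> (0::complex)"
    using assms of_nat_neq_0[of n, where 'a=complex] by (metis mult_eq_0_iff zero_neq_numeral)
  show ?thesis
    by (simp only: acoef.simps times_divide_eq_right nonzero_mult_div_cancel_left[OF d])
qed

lemma acoef_rec:
  assumes "\<And>n. of_nat (Suc n) + \<nu> \<noteq> 0"
  shows "Rc K \<nu> (acoef K \<nu>) n = 0"
proof (cases n)
  case 0 then show ?thesis by (simp add: Rc_def shc_def)
next
  case (Suc k)
  have "4 * of_nat (Suc k) * (of_nat (Suc k) + \<nu>) * acoef K \<nu> (Suc k) = - of_real K * acoef K \<nu> k"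
    by (rule acoef_rec'[OF assms])
  then show ?thesis using Suc by (simp add: Rc_def shc_def)
qed

lemma entire_acoef: "entire_c (acoef K \<nu>)"
  unfolding entire_c_def
proof
  fix z :: complex
  define N where "N = nat \<lceil>norm \<nu> + \<bar>K\<bar> * norm z\<rceil>"
  show "summable (\<lambda>n. acoef K \<nu> n * z ^ n)"
  proof (rule summable_ratio_test[where c = "1/2" and N = N])
    fix n assume n: "N \<le> n"
    have "norm \<nu> + \<bar>K\<bar> * norm z \<le> real N" unfolding N_def by (rule real_nat_ceiling_ge)
    also have "\<dots> \<le> real n" using n by simp
    finally have n0: "norm \<nu> + \<bar>K\<bar> * norm z \<le> real n" .
    have p: "0 \<le> \<bar>K\<bar> * norm z" by simp
    have n1a: "real n \<ge> norm \<nu>" using n0 p by linarith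
    have n1b: "real n \<ge> \<bar>K\<bar> * norm z" using n0 norm_ge_zero[of \<nu>] by linarith
    note n1 = n1a n1b
    have "norm (of_nat (Suc n) + \<nu>) \<ge> norm (of_nat (Suc n) :: complex) - norm \<nu>"
      by (metis norm_diff_ineq)
    moreover have e: "norm (of_nat (Suc n) :: complex) = 1 + real n" by (simp only: norm_of_nat)
    ultimately have d1: "norm (of_nat (Suc n) + \<nu>) \<ge> 1" using n1 by linarith
    have "norm (acoef K \<nu> (Suc n) * z ^ Suc n) =
          (\<bar>K\<bar> * norm z) / (4 * real (Suc n) * norm (of_nat (Suc n) + \<nu>)) * norm (acoef K \<nu> n * z ^ n)"
    proof -
      have eq: "acoef K \<nu> (Suc n) * z ^ Suc n = (- of_real K * z / (4 * of_nat (Suc n) * (of_nat (Suc n) + \<nu>))) * (acoef K \<nu> n * z ^ n)"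
        by (simp only: acoef.simps) (simp add: mult_ac)
      have "norm (- of_real K * z / (4 * of_nat (Suc n) * (of_nat (Suc n) + \<nu>))) = \<bar>K\<bar> * norm z / (4 * real (Suc n) * norm (of_nat (Suc n) + \<nu>))"
        by (simp only: norm_divide norm_mult norm_minus_cancel norm_of_real norm_of_nat norm_numeral)
      then show ?thesis unfolding eq norm_mult by simp
    qed
    also have "\<dots> \<le> 1/2 * norm (acoef K \<nu> n * z ^ n)"
    proof (rule mult_right_mono)
      have "4 * real (Suc n) * norm (of_nat (Suc n) + \<nu>) \<ge> 4 * real (Suc n)"
        using d1 by simp
      moreover have "4 * real (Suc n) \<ge> 2 * (\<bar>K\<bar> * norm z)" using n1 by simp
      ultimately have D1: "4 * real (Suc n) * norm (of_nat (Suc n) + \<nu>) \<ge> 2 * (\<bar>K\<bar> * norm z)" by linarith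
      have Dpos: "4 * real (Suc n) * norm (of_nat (Suc n) + \<nu>) > 0" using d1 by (intro mult_pos_pos) auto
      show "(\<bar>K\<bar> * norm z) / (4 * real (Suc n) * norm (of_nat (Suc n) + \<nu>)) \<le> 1/2"
        unfolding pos_divide_le_eq[OF Dpos] using D1 by linarith
    qed simp
    finally show "norm (acoef K \<nu> (Suc n) * z ^ Suc n) \<le> 1/2 * norm (acoef K \<nu> n * z ^ n)" .
  qed simp
qed

lemma fl_zero: "fl \<kappa> (\<lambda>n. 0) t = 0"
  by (simp add: fl_def fser_def)

lemma sol_fl:
  assumes "entire_c c" "\<And>n. Rc K \<kappa> c n = 0"
  shows "sol K (\<kappa>^2) (fl \<kappa> c) (fl \<kappa> (Dc \<kappa> c))"
  unfolding sol_def
proof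
  fix t
  have "fl \<kappa> (Rc K \<kappa> c) t = 0" using assms(2) fl_cong[of "Rc K \<kappa> c" "\<lambda>n. 0"] fl_zero by metis
  then have eq: "fl \<kappa> (Dc \<kappa> (Dc \<kappa> c)) t = (pot K t - \<kappa>^2) * fl \<kappa> c t"
    using fl_residual[OF assms(1), of \<kappa> t K] by simp
  show "(fl \<kappa> c has_vector_derivative fl \<kappa> (Dc \<kappa> c) t) (at t) \<and>
        (fl \<kappa> (Dc \<kappa> c) has_vector_derivative (pot K t - \<kappa>\<^sup>2) * fl \<kappa> c t) (at t)"
    using fl_deriv[OF assms(1)] fl_deriv[OF entire_Dc[OF assms(1)]] eq by metis
qed

lemma fser_holo: "entire_c c \<Longrightarrow> fser c holomorphic_on S"
  unfolding holomorphic_on_def field_differentiable_def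
  using fser_deriv has_field_derivative_at_within by blast

lemma fl_nonzero:
  assumes "entire_c c" "c 0 \<noteq> 0"
  shows "\<exists>t. fl \<kappa> c t \<noteq> 0"
proof (rule ccontr)
  assume "\<not> (\<exists>t. fl \<kappa> c t \<noteq> 0)"
  then have z: "fser c (exp (2 * \<i> * of_real t)) = 0" for t
    by (auto simp: fl_def)
  have h1: "fser c holomorphic_on interior (cball (0::complex) 1)" by (rule fser_holo[OF assms(1)])
  have h2: "continuous_on (closure (cball (0::complex) 1)) (fser c)"
    by (rule holomorphic_on_imp_continuous_on, rule fser_holo[OF assms(1)])
  have h4: "norm (fser c z) \<le> 0" if "z \<in> frontier (cball (0::complex) 1)" for z
  proof -
    from that have nz: "norm z = 1" by simp
    then have "z \<noteq> 0" by auto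
    then have "z = exp (\<i> * of_real (Arg z))" using Arg_eq[of z] nz by simp
    also have "\<dots> = exp (2 * \<i> * of_real (Arg z / 2))" by simp
    finally show "norm (fser c z) \<le> 0" using z by (metis norm_zero order_refl)
  qed
  have "norm (fser c 0) \<le> 0"
    by (rule maximum_modulus_frontier[OF h1 h2 _ h4]) auto
  then show False using assms(2) by (simp add: fser_zero)
qed

lemma exp_mult_int:
  assumes "exp (\<i> * \<nu> * pi) = exp (- \<i> * \<nu> * pi)"
  shows "\<exists>k::int. \<nu> = of_int k"
proof -
  have "exp (\<i> * \<nu> * pi) * exp (\<i> * \<nu> * pi) = exp (- \<i> * \<nu> * pi) * exp (\<i> * \<nu> * pi)"
    using assms by simp
  then have "exp (2 * \<i> * \<nu> * pi) = 1"
    by (simp flip: exp_add add: algebra_simps)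
  then obtain n :: int where "Re (2 * \<i> * \<nu> * pi) = 0" "Im (2 * \<i> * \<nu> * pi) = of_int (2 * n) * pi"
    unfolding exp_eq_1 by blast
  then have "Im \<nu> = 0" "Re \<nu> = of_int n" by simp_all
  then have "\<nu> = of_int n" by (simp add: complex_eq_iff)
  then show ?thesis by blast
qed

lemma per_is_square:
  assumes P: "periodic_ev K lam"
  shows "\<exists>k::int. lam = (of_int k)^2"
proof (rule ccontr)
  assume ns: "\<not> (\<exists>k::int. lam = (of_int k)^2)"
  define \<nu> where "\<nu> = csqrt lam"
  have nu2: "\<nu>^2 = lam" "(-\<nu>)^2 = lam" by (simp_all add: \<nu>_def)
  have nint: "\<nu> \<noteq> of_int k" for k
  proof
    assume "\<nu> = of_int k"
    then have "lam = (of_int k)^2" using nu2 by simp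
    then show False using ns by blast
  qed
  have c1: "of_nat (Suc n) + \<nu> \<noteq> 0" for n
    using nint[of "- int (Suc n)"] by (auto simp: add_eq_0_iff)
  have c2: "of_nat (Suc n) + (-\<nu>) \<noteq> 0" for n
    using nint[of "int (Suc n)"] by auto
  define a where "a = acoef K \<nu>"
  define b where "b = acoef K (-\<nu>)"
  define u where "u = fl \<nu> a"
  define u' where "u' = fl \<nu> (Dc \<nu> a)"
  define v where "v = fl (-\<nu>) b"
  define v' where "v' = fl (-\<nu>) (Dc (-\<nu>) b)"
  have U: "sol K lam u u'"
    using sol_fl[OF entire_acoef acoef_rec[OF c1]] nu2 unfolding u_def u'_def a_def by metis
  have V: "sol K lam v v'"
    using sol_fl[OF entire_acoef acoef_rec[OF c2]] nu2 unfolding v_def v'_def b_def by metis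
  define \<mu> where "\<mu> = exp (\<i> * \<nu> * pi)"
  define \<mu>' where "\<mu>' = exp (\<i> * (-\<nu>) * pi)"
  have mm: "\<mu> * \<mu>' = 1" unfolding \<mu>_def \<mu>'_def by (simp flip: exp_add)
  have su: "u (t + pi) = \<mu> * u t" "u' (t + pi) = \<mu> * u' t" for t
    unfolding u_def u'_def \<mu>_def by (simp_all add: fl_shift_pi)
  have sv: "v (t + pi) = \<mu>' * v t" "v' (t + pi) = \<mu>' * v' t" for t
    unfolding v_def v'_def \<mu>'_def by (simp_all add: fl_shift_pi)
  have mneq: "\<mu> \<noteq> \<mu>'"
  proof
    assume "\<mu> = \<mu>'"
    then show False using exp_mult_int[of \<nu>] nint unfolding \<mu>_def \<mu>'_def by auto
  qed
  obtain t1 where t1: "u t1 \<noteq> 0"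
    using fl_nonzero[OF entire_acoef, of K \<nu> \<nu>] unfolding u_def a_def by auto
  obtain t2 where t2: "v t2 \<noteq> 0"
    using fl_nonzero[OF entire_acoef, of K "-\<nu>" "-\<nu>"] unfolding v_def b_def by auto
  define W0 where "W0 = u 0 * v' 0 - u' 0 * v 0"
  have W0: "W0 \<noteq> 0"
  proof
    assume W: "W0 = 0"
    have nz: "\<not> (u 0 = 0 \<and> u' 0 = 0)"
    proof
      assume "u 0 = 0 \<and> u' 0 = 0"
      then have "u t1 = 0" using sol_unique0[OF U] by blast
      then show False using t1 by simp
    qed
    obtain c where c: "\<And>t. v t = c * u t" using sol_dep[OF U V _ nz] W unfolding W0_def by blast
    have "\<mu>' * v t2 = v (t2 + pi)" using sv by simp
    also have "\<dots> = \<mu> * v t2" using c su by simp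
    finally have "(\<mu> - \<mu>') * v t2 = 0" by (metis eq_iff_diff_eq_0 mult_cancel_right mult_zero_left)
    then show False using t2 mneq by auto
  qed
  define c0 where "c0 t = (v' 0 / W0) * u t + (- u' 0 / W0) * v t" for t
  define c0' where "c0' t = (v' 0 / W0) * u' t + (- u' 0 / W0) * v' t" for t
  define s0 where "s0 t = (- v 0 / W0) * u t + (u 0 / W0) * v t" for t
  define s0' where "s0' t = (- v 0 / W0) * u' t + (u 0 / W0) * v' t" for t
  have C: "sol K lam c0 c0'" unfolding c0_def[abs_def] c0'_def[abs_def] by (rule sol_lin[OF U V])
  have S: "sol K lam s0 s0'" unfolding s0_def[abs_def] s0'_def[abs_def] by (rule sol_lin[OF U V])
  have "c0 0 = (u 0 * v' 0 - u' 0 * v 0) / W0" unfolding c0_def by (simp add: diff_divide_distrib add_divide_distrib mult_ac)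
  then have c00: "c0 0 = 1" using W0 unfolding W0_def by simp
  have c00': "c0' 0 = 0" unfolding c0'_def by (simp add: diff_divide_distrib add_divide_distrib mult_ac)
  have "s0' 0 = (u 0 * v' 0 - u' 0 * v 0) / W0" unfolding s0'_def by (simp add: diff_divide_distrib add_divide_distrib mult_ac)
  then have s00': "s0' 0 = 1" using W0 unfolding W0_def by simp
  have s00: "s0 0 = 0" unfolding s0_def by (simp add: diff_divide_distrib add_divide_distrib mult_ac)
  have "csol K lam 0 = c0" by (rule csol_eq[OF C c00 c00'])
  moreover have "ssol K lam 0 = s0" by (rule ssol_eq[OF S s00 s00'])
  ultimately have "floquet_disc K lam = (c0 pi + s0' pi) / 2"
    unfolding floquet_disc_def using sol_vd[OF S] by simp
  also have "c0 pi + s0' pi = (\<mu> + \<mu>') * (u 0 * v' 0 - u' 0 * v 0) / W0"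
    using su[of 0] sv[of 0] unfolding c0_def s0'_def by (simp add: algebra_simps add_divide_distrib diff_divide_distrib)
  also have "\<dots> = \<mu> + \<mu>'" using W0 unfolding W0_def by simp
  finally have fd: "floquet_disc K lam = (\<mu> + \<mu>') / 2" .
  have "((\<mu> + \<mu>') / 2)^2 = 1" using P unfolding periodic_ev_def fd by simp
  then have h4: "(\<mu> + \<mu>')^2 = 4" by (simp add: power_divide)
  have "(\<mu> - \<mu>')^2 = (\<mu> + \<mu>')^2 - 4 * (\<mu> * \<mu>')" by (simp add: power2_eq_square algebra_simps)
  then have "(\<mu> - \<mu>')^2 = 0" using h4 mm by simp
  then show False using mneq by simp
qed

lemma fser_zero_coeffs: "(\<And>n. c n = 0) \<Longrightarrow> fser c z = 0"
  by (simp add: fser_def)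

lemma bessel_ode:
  fixes m :: nat and K :: real
  defines "a \<equiv> acoef K (of_nat m)"
  shows "4 * z * fser (diffs (diffs a)) z + 4 * (of_nat m + 1) * fser (diffs a) z + of_real K * fser a z = 0"
proof -
  have ea: "entire_c a" unfolding a_def by (rule entire_acoef)
  have e1: "entire_c (diffs a)" by (rule entire_diffs[OF ea])
  have e2: "entire_c (\<lambda>n. of_nat n * diffs a n)" by (rule entire_theta[OF e1])
  have "4 * z * fser (diffs (diffs a)) z = 4 * fser (\<lambda>n. of_nat n * diffs a n) z"
    using fser_theta[OF e1, of z] by simp
  also have "\<dots> = fser (\<lambda>n. 4 * (of_nat n * diffs a n)) z" by (rule fser_cmult[OF e2, symmetric])
  finally have A: "4 * z * fser (diffs (diffs a)) z = fser (\<lambda>n. 4 * (of_nat n * diffs a n)) z" .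
  have B: "4 * (of_nat m + 1) * fser (diffs a) z = fser (\<lambda>n. (4 * (of_nat m + 1)) * diffs a n) z"
    by (rule fser_cmult[OF e1, symmetric])
  have C: "of_real K * fser a z = fser (\<lambda>n. of_real K * a n) z"
    by (rule fser_cmult[OF ea, symmetric])
  have "fser (\<lambda>n. 4 * (of_nat n * diffs a n)) z + fser (\<lambda>n. (4 * (of_nat m + 1)) * diffs a n) z
      = fser (\<lambda>n. 4 * (of_nat n * diffs a n) + (4 * (of_nat m + 1)) * diffs a n) z"
    by (rule fser_add[symmetric]) (intro entire_cmult e1 e2)+
  moreover have "\<dots> + fser (\<lambda>n. of_real K * a n) z = fser (\<lambda>n. (4 * (of_nat n * diffs a n) + (4 * (of_nat m + 1)) * diffs a n) + of_real K * a n) z"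
    by (rule fser_add[symmetric]) (intro entire_add entire_cmult e1 e2 ea)+
  moreover have "\<dots> = 0"
  proof (rule fser_zero_coeffs)
    fix n
    have nz: "of_nat (Suc n) + of_nat m \<noteq> (0::complex)"
      by (metis of_nat_add of_nat_eq_0_iff add_is_0 nat.distinct(1))
    have r: "4 * of_nat (Suc n) * (of_nat (Suc n) + of_nat m) * a (Suc n) = - of_real K * a n"
      unfolding a_def by (rule acoef_rec'[OF nz])
    show "4 * (of_nat n * diffs a n) + 4 * (of_nat m + 1) * diffs a n + of_real K * a n = 0"
      using r unfolding diffs_def by (simp add: algebra_simps)
  qed
  ultimately show ?thesis using A B C by simp
qed

lemma chain_lin:
  assumes "\<And>z. (g has_field_derivative g' z) (at z)"
  shows "((\<lambda>r::real. g (w * of_real r)) has_vector_derivative (w * g' (w * of_real r))) (at r)"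
proof -
  have l: "((\<lambda>r::real. w * of_real r) has_vector_derivative w) (at r)"
    using has_vector_derivative_mult_right[OF has_vector_derivative_of_real[OF DERIV_ident]] by simp
  show ?thesis using field_vector_diff_chain_at[OF l assms] by (simp add: o_def)
qed



lemma bessel_nz:
  fixes m :: nat and K :: real
  assumes K: "K > 0" and w1: "norm w = 1" and wn: "w \<noteq> 1"
    and bc: "fser (acoef K (of_nat m)) w = 0 \<or>
             of_nat m * fser (acoef K (of_nat m)) w + 2 * w * fser (diffs (acoef K (of_nat m))) w = 0"
  shows False
proof -
  define a where "a = acoef K (of_nat m)"
  define F where "F = fser a"
  define F1 where "F1 = fser (diffs a)"
  define F2 where "F2 = fser (diffs (diffs a))"
  have ea: "entire_c a" unfolding a_def by (rule entire_acoef)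
  have e1: "entire_c (diffs a)" by (rule entire_diffs[OF ea])
  have dF: "(F has_field_derivative F1 z) (at z)" for z
    unfolding F_def F1_def by (rule fser_deriv[OF ea])
  have dF1: "(F1 has_field_derivative F2 z) (at z)" for z
    unfolding F1_def F2_def by (rule fser_deriv[OF e1])
  have ode: "z * F2 z + (of_nat m + 1) * F1 z = - (of_real K / 4) * F z" for z
  proof -
    have h': "4 * z * F2 z + 4 * (of_nat m + 1) * F1 z = - (of_real K * F z)"
      using bessel_ode[where K=K and m=m and z=z] unfolding F_def F1_def F2_def a_def
      by (simp add: eq_neg_iff_add_eq_0)
    have "z * F2 z + (of_nat m + 1) * F1 z = (4 * z * F2 z + 4 * (of_nat m + 1) * F1 z) / 4" by simp
    also have "\<dots> = - (of_real K * F z) / 4" using h' by simp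
    finally show ?thesis by simp
  qed
  define y where "y r = F (w * of_real r)" for r
  define y1 where "y1 r = w * F1 (w * of_real r)" for r
  define A where "A r = (of_real (r ^ Suc m) :: complex)" for r
  define A' where "A' r = (of_real (real (Suc m) * r ^ m) :: complex)" for r
  have dy: "(y has_vector_derivative y1 r) (at r)" for r
    unfolding y_def[abs_def] y1_def using chain_lin[OF dF] by simp
  have dy1: "(y1 has_vector_derivative (w * (w * F2 (w * of_real r)))) (at r)" for r
    unfolding y1_def[abs_def] by (intro has_vector_derivative_mult_right chain_lin dF1)
  have dA: "(A has_vector_derivative A' r) (at r)" for r
  proof -
    have "((\<lambda>r. r ^ Suc m) has_real_derivative real (Suc m) * r ^ m) (at r)"
      using DERIV_pow[of "Suc m" r] by simp
    then show ?thesis unfolding A_def[abs_def] A'_def by (rule has_vector_derivative_of_real)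
  qed
  define E where "E r = A r * y1 r * cnj (y r)" for r
  define p where "p r = r ^ m * (norm (y r))^2" for r
  define q where "q r = r ^ Suc m * (norm (y1 r))^2" for r
  define E' where "E' r = - (of_real K * w / 4) * of_real (p r) + of_real (q r)" for r
  have dE: "(E has_vector_derivative E' r) (at r)" for r
  proof -
    have D: "(E has_vector_derivative
      (A r * y1 r * cnj (y1 r) + (A r * (w * (w * F2 (w * of_real r))) + A' r * y1 r) * cnj (y r))) (at r)"
      unfolding E_def[abs_def]
      by (intro has_vector_derivative_mult has_vector_derivative_cnj dA dy dy1)
    have eq1: "A r * y1 r * cnj (y1 r) = of_real (q r)"
      unfolding A_def q_def of_real_mult complex_norm_square by (simp add: mult_ac)
    have eq2: "A r * (w * (w * F2 (w * of_real r))) + A' r * y1 r = - (of_real K * w / 4) * of_real (r ^ m) * y r"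
    proof -
      have "A r * (w * (w * F2 (w * of_real r))) + A' r * y1 r
          = of_real (r ^ m) * w * ((w * of_real r) * F2 (w * of_real r) + (of_nat m + 1) * F1 (w * of_real r))"
        unfolding A_def A'_def y1_def by (simp add: algebra_simps)
      also have "\<dots> = - (of_real K * w / 4) * of_real (r ^ m) * y r"
        unfolding ode y_def by (simp add: algebra_simps)
      finally show ?thesis .
    qed
    have eq3: "E' r = - (of_real K * w / 4) * of_real (r ^ m) * (y r * cnj (y r)) + of_real (q r)"
      unfolding E'_def p_def of_real_mult complex_norm_square by (simp add: mult_ac)
    have "A r * y1 r * cnj (y1 r) + (A r * (w * (w * F2 (w * of_real r))) + A' r * y1 r) * cnj (y r) = E' r"
      unfolding eq1 eq2 eq3 by (simp add: algebra_simps)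
    with D show ?thesis by simp
  qed
  have cy: "isCont y r" for r using dy has_vector_derivative_continuous by blast
  have cy1: "isCont y1 r" for r using dy1 has_vector_derivative_continuous by blast
  have cp: "continuous_on {0..1} p"
    unfolding p_def by (intro continuous_at_imp_continuous_on ballI continuous_intros cy)
  have cq: "continuous_on {0..1} q"
    unfolding q_def by (intro continuous_at_imp_continuous_on ballI continuous_intros cy1)
  define P where "P = integral {0..1} p"
  define Q where "Q = integral {0..1} q"
  have hp: "(p has_integral P) {0..1}" unfolding P_def using integrable_continuous_real[OF cp] by (simp add: has_integral_integral)
  have hq: "(q has_integral Q) {0..1}" unfolding Q_def using integrable_continuous_real[OF cq] by (simp add: has_integral_integral)
  have h1: "((\<lambda>r. of_real (p r) :: complex) has_integral of_real P) {0..1}"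
    using has_integral_linear[OF hp bounded_linear_of_real] by (simp add: o_def)
  have h2: "((\<lambda>r. of_real (q r) :: complex) has_integral of_real Q) {0..1}"
    using has_integral_linear[OF hq bounded_linear_of_real] by (simp add: o_def)
  have hE': "(E' has_integral (- (of_real K * w / 4) * of_real P + of_real Q)) {0..1}"
    unfolding E'_def[abs_def] by (intro has_integral_add has_integral_mult_right h1 h2)
  have ftc: "(E' has_integral (E 1 - E 0)) {0..1}"
    by (rule fundamental_theorem_of_calculus) (auto intro: has_vector_derivative_at_within dE)
  have Eeq: "E 1 - E 0 = - (of_real K * w / 4) * of_real P + of_real Q"
    using has_integral_unique[OF ftc hE'] .
  have E0: "E 0 = 0" unfolding E_def A_def by simp
  have E1: "E 1 = w * F1 w * cnj (F w)" unfolding E_def A_def y_def y1_def by simp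
  obtain R where R: "R \<ge> 0" "E 1 = - of_real R"
  proof (cases "F w = 0")
    case True
    then show ?thesis using that[of 0] E1 by simp
  next
    case False
    then have "of_nat m * F w + 2 * w * F1 w = 0" using bc unfolding F_def F1_def a_def by simp
    then have h2: "2 * w * F1 w = - (of_nat m * F w)" by (simp add: eq_neg_iff_add_eq_0 add.commute)
    have "w * F1 w = (2 * w * F1 w) / 2" by simp
    also have "\<dots> = - (of_nat m / 2) * F w" unfolding h2 by simp
    finally have "w * F1 w = - (of_nat m / 2) * F w" .
    then have "E 1 = - (of_nat m / 2) * (F w * cnj (F w))" using E1 by simp
    also have "\<dots> = - of_real (real m / 2 * (norm (F w))^2)"
      unfolding of_real_mult complex_norm_square by simp
    finally show ?thesis using that[of "real m / 2 * (norm (F w))^2"] by simp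
  qed
  have Q0: "Q \<ge> 0" using hq by (rule has_integral_nonneg) (simp add: q_def)
  have P0: "P \<ge> 0" using hp by (rule has_integral_nonneg) (simp add: p_def)
  have Pnz: "P \<noteq> 0"
  proof
    assume "P = 0"
    then have hp0: "(p has_integral 0) (cbox 0 1)" using hp by simp
    have pz: "p r = 0" if "r \<in> {0..1}" for r
      by (rule has_integral_0_cbox_imp_0[OF _ _ hp0]) (use cp that in \<open>auto simp: p_def\<close>)
    have yz: "y (inverse (real (Suc n))) = 0" for n
    proof -
      have "inverse (real (Suc n)) \<in> {0..1}" by (simp add: field_simps)
      then have "p (inverse (real (Suc n))) = 0" by (rule pz)
      then show ?thesis unfolding p_def by simp
    qed
    have "(\<lambda>n. y (inverse (real (Suc n)))) \<longlonglongrightarrow> y 0"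
      by (rule isCont_tendsto_compose[OF cy LIMSEQ_inverse_real_of_nat])
    then have "y 0 = 0" using yz by (simp add: LIMSEQ_const_iff)
    moreover have "y 0 = 1" unfolding y_def F_def by (simp add: fser_zero a_def)
    ultimately show False by simp
  qed
  have "of_real K * w / 4 * of_real P = of_real (Q + R)"
    using Eeq E0 R by (simp add: algebra_simps)
  then have wr: "w = of_real (4 * (Q + R) / (K * P))"
    using K Pnz by (simp add: field_simps)
  have r0: "4 * (Q + R) / (K * P) \<ge> 0" using K P0 Q0 R by simp
  have "norm w = 4 * (Q + R) / (K * P)" unfolding wr norm_of_real using r0 by (rule abs_of_nonneg)
  then have "4 * (Q + R) / (K * P) = 1" using w1 by (metis)
  then have "w = 1" using wr by (metis of_real_1)
  then show False using wn by simp
qed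

primrec hlow :: "real \<Rightarrow> nat \<Rightarrow> nat \<Rightarrow> complex" where
  "hlow K m 0 = 1"
| "hlow K m (Suc k) = - of_real K * hlow K m k / (4 * of_nat (Suc k) * (of_nat (Suc k) - of_nat m))"

primrec dseq :: "complex \<Rightarrow> nat \<Rightarrow> nat \<Rightarrow> complex" where
  "dseq A m 0 = 0"
| "dseq A m (Suc j) = dseq A m j + (A * \<i> / 2) * of_real (1 / real (Suc j) + 1 / real (Suc j + m))"

definition Aco :: "real \<Rightarrow> nat \<Rightarrow> complex" where
  "Aco K m = (if m = 0 then 1 else of_real K * hlow K m (m - 1) / (2 * \<i> * of_nat m))"

definition hco :: "real \<Rightarrow> nat \<Rightarrow> nat \<Rightarrow> complex" where
  "hco K m n = (if n < m then hlow K m n else acoef K (of_nat m) (n - m) * dseq (Aco K m) m (n - m))"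

lemma hlow_nz: "K \<noteq> 0 \<Longrightarrow> k < m \<Longrightarrow> hlow K m k \<noteq> 0"
proof (induction k)
  case 0 then show ?case by simp
next
  case (Suc k)
  have "of_nat (Suc k) \<noteq> (of_nat m :: complex)" using Suc.prems by (simp only: of_nat_eq_iff)
  then have "4 * of_nat (Suc k) * (of_nat (Suc k) - of_nat m) \<noteq> (0::complex)"
    by (metis mult_eq_0_iff of_nat_eq_0_iff right_minus_eq zero_neq_numeral nat.distinct(1))
  then show ?case using Suc by simp
qed

lemma hlow_rec:
  assumes "Suc k \<noteq> m"
  shows "4 * of_nat (Suc k) * (of_nat (Suc k) - of_nat m) * hlow K m (Suc k) = - of_real K * hlow K m k"
proof -
  have "of_nat (Suc k) \<noteq> (of_nat m :: complex)" using assms by (simp only: of_nat_eq_iff) simp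
  then have d: "4 * of_nat (Suc k) * (of_nat (Suc k) - of_nat m) \<noteq> (0::complex)"
    by (metis mult_eq_0_iff of_nat_eq_0_iff right_minus_eq zero_neq_numeral nat.distinct(1))
  show ?thesis
    by (simp only: hlow.simps times_divide_eq_right nonzero_mult_div_cancel_left[OF d])
qed

lemma Aco_nz: "K \<noteq> 0 \<Longrightarrow> Aco K m \<noteq> 0"
  unfolding Aco_def using hlow_nz[of K "m - 1" m] by auto

lemma dseq_bound: "norm (dseq A m j) \<le> norm A * real j"
proof (induction j)
  case 0 then show ?case by simp
next
  case (Suc j)
  have b: "0 \<le> 1 / real (Suc j) + 1 / real (Suc j + m)" "1 / real (Suc j) + 1 / real (Suc j + m) \<le> 2"
  proof -
    have "1 / real (Suc j) \<le> 1" "1 / real (Suc j + m) \<le> 1" by (simp_all add: field_simps)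
    then show "1 / real (Suc j) + 1 / real (Suc j + m) \<le> 2" by linarith
  qed simp
  have "norm ((A * \<i> / 2) * of_real (1 / real (Suc j) + 1 / real (Suc j + m))) =
        norm A / 2 * (1 / real (Suc j) + 1 / real (Suc j + m))"
    by (simp only: norm_mult norm_divide norm_of_real abs_of_nonneg[OF b(1)] norm_ii norm_numeral)
  also have "\<dots> \<le> norm A / 2 * 2" using b(2) by (intro mult_left_mono) auto
  finally have "norm ((A * \<i> / 2) * of_real (1 / real (Suc j) + 1 / real (Suc j + m))) \<le> norm A" by simp
  then show ?case using Suc.IH norm_triangle_ineq[of "dseq A m j" "(A * \<i> / 2) * of_real (1 / real (Suc j) + 1 / real (Suc j + m))"]
    by (simp add: algebra_simps)
qed

lemma entire_hco: "entire_c (hco K m)"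
  unfolding entire_c_def
proof
  fix z :: complex
  define a where "a = acoef K (of_nat m)"
  define A where "A = Aco K m"
  have ea: "entire_c (\<lambda>n. of_nat n * a n)" unfolding a_def by (intro entire_theta entire_acoef)
  then have "summable (\<lambda>n. (of_nat n * a n) * (of_real (norm z + 1)) ^ n)" unfolding entire_c_def by blast
  then have s1: "summable (\<lambda>n. norm ((of_nat n * a n) * z ^ n))"
    by (rule powser_insidea) simp
  have s2: "summable (\<lambda>n. norm A * norm z ^ m * norm ((of_nat n * a n) * z ^ n))"
    by (intro summable_mult s1)
  have "summable (\<lambda>n. hco K m (n + m) * z ^ (n + m))"
  proof (rule summable_comparison_test[OF _ s2], intro exI allI impI)
    fix n :: nat
    have eq: "hco K m (n + m) * z ^ (n + m) = (a n * dseq A m n) * z ^ (n + m)"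
      by (simp add: hco_def a_def A_def)
    have "norm (hco K m (n + m) * z ^ (n + m)) = norm (a n) * norm (dseq A m n) * norm z ^ n * norm z ^ m"
      unfolding eq by (simp add: norm_mult norm_power power_add)
    also have "\<dots> \<le> norm (a n) * (norm A * real n) * norm z ^ n * norm z ^ m"
      by (intro mult_right_mono mult_left_mono dseq_bound) auto
    also have "\<dots> = norm A * norm z ^ m * norm ((of_nat n * a n) * z ^ n)"
      by (simp add: norm_mult norm_power)
    finally show "norm (hco K m (n + m) * z ^ (n + m)) \<le> norm A * norm z ^ m * norm ((of_nat n * a n) * z ^ n)" .
  qed
  then show "summable (\<lambda>n. hco K m n * z ^ n)"
    by (subst (asm) summable_iff_shift[of "\<lambda>n. hco K m n * z ^ n" m]) 
qed

lemma hco_rec: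
  "Rc K (- of_nat m) (hco K m) n = 2 * Aco K m * shk m (Dc (of_nat m) (acoef K (of_nat m))) n"
proof -
  define a where "a = acoef K (of_nat m)"
  define A where "A = Aco K m"
  define h where "h = hco K m"
  have "Rc K (- of_nat m) h n = 2 * A * shk m (Dc (of_nat m) a) n"
  proof (cases "n < m")
    case True
    show ?thesis
    proof (cases n)
      case 0 then show ?thesis using True by (simp add: Rc_def shc_def shk_def)
    next
      case (Suc k)
      have hs: "h (Suc k) = hlow K m (Suc k)" "h k = hlow K m k" using True Suc by (simp_all add: h_def hco_def)
      have "4 * of_nat (Suc k) * (of_nat (Suc k) - of_nat m) * hlow K m (Suc k) = - of_real K * hlow K m k"
        by (rule hlow_rec) (use True Suc in simp)
      then show ?thesis using True Suc hs by (simp add: Rc_def shc_def shk_def)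
    qed
  next
    case False
    show ?thesis
    proof (cases "n = m")
      case True
      show ?thesis
      proof (cases m)
        case 0 then show ?thesis using True by (simp add: Rc_def shc_def shk_def Dc_def h_def hco_def)
      next
        case (Suc k)
        have hk: "h k = hlow K m k" using Suc by (simp add: h_def hco_def)
        have hm: "h m = 0" by (simp add: h_def hco_def)
        have k1: "(1 + of_nat k :: complex) \<noteq> 0" using of_nat_neq_0[of k, where 'a=complex] by simp
        have "Rc K (- of_nat m) h n = of_real K * hlow K m k"
          using True Suc hk hm by (simp add: Rc_def shc_def)
        moreover have "2 * A * shk m (Dc (of_nat m) a) n = of_real K * hlow K m k"
          using True Suc k1 by (simp add: shk_def Dc_def A_def Aco_def a_def)
        ultimately show ?thesis by simp
      qed
    next
      case F2: False
      have mn: "m < n" using False F2 by simp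
      then obtain j where "n = Suc (m + j)" using less_imp_Suc_add by blast
      then have nj: "n = m + Suc j" by simp
      have h1: "h n = a (Suc j) * dseq A m (Suc j)" using nj by (simp add: h_def hco_def a_def A_def)
      have h0: "shc h n = a j * dseq A m j" using nj by (simp add: h_def hco_def a_def A_def shc_def)
      have nz: "of_nat (Suc j) + of_nat m \<noteq> (0::complex)"
        by (simp only: of_nat_add[symmetric] of_nat_eq_0_iff)
      have r: "4 * of_nat (Suc j) * (of_nat (Suc j) + of_nat m) * a (Suc j) = - of_real K * a j"
        unfolding a_def by (rule acoef_rec'[OF nz])
      define s :: complex where "s = of_nat (Suc j)"
      define t :: complex where "t = of_nat (Suc j) + of_nat m"
      have s0: "s \<noteq> 0" unfolding s_def by (simp only: of_nat_eq_0_iff)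
      have t0: "t \<noteq> 0" unfolding t_def using nz .
      have dd: "dseq A m (Suc j) = dseq A m j + (A * \<i> / 2) * (1 / s + 1 / t)"
        by (simp add: s_def t_def)
      have nn: "t + - of_nat m = s" "of_nat n = t" "of_nat (n - m) = s"
        using nj by (simp_all add: s_def t_def)
      define a1 where "a1 = a (Suc j)"
      define d1 where "d1 = dseq A m (Suc j)"
      define d0 where "d0 = dseq A m j"
      have L: "Rc K (- of_nat m) h n = 4 * t * s * a1 * d1 + of_real K * (a j * d0)"
        unfolding Rc_def h1 h0 nn(2) a1_def d1_def d0_def nn(1) by (simp only: mult.assoc)
      have r': "of_real K * a j = - (4 * s * t * a1)" using r unfolding a1_def s_def t_def by simp
      have "Rc K (- of_nat m) h n = 4 * t * s * a1 * (d1 - d0)"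
        unfolding L using r' by (simp add: algebra_simps)
      also have "d1 - d0 = (A * \<i> / 2) * (1 / s + 1 / t)" using dd unfolding d1_def d0_def by simp
      also have "4 * t * s * a1 * ((A * \<i> / 2) * (1 / s + 1 / t)) = 2 * A * \<i> * a1 * (s * t * (1 / s + 1 / t))"
        by (simp only: mult_ac) simp
      also have "s * t * (1 / s + 1 / t) = t + s" using s0 t0 by (simp add: distrib_left)
      also have "2 * A * \<i> * a1 * (t + s) = 2 * A * shk m (Dc (of_nat m) a) n"
        using nj unfolding a1_def by (simp add: shk_def Dc_def s_def t_def algebra_simps)
      finally show ?thesis .
    qed
  qed
  then show ?thesis by (simp add: a_def A_def h_def)
qed

lemma fl_shk:
  assumes "entire_c c"
  shows "fl (- of_nat m) (shk m c) t = fl (of_nat m) c t"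
proof -
  have "exp (2 * \<i> * of_real t) ^ m = exp (of_nat m * (2 * \<i> * of_real t))"
    by (rule exp_of_nat_mult[symmetric])
  then have "exp (\<i> * (- of_nat m) * of_real t) * exp (2 * \<i> * of_real t) ^ m = exp (\<i> * of_nat m * of_real t)"
    by (simp add: exp_add[symmetric] algebra_simps)
  then show ?thesis unfolding fl_def fser_shk[OF assms] by (simp add: mult.assoc[symmetric])
qed

lemma eps_eq: "exp (\<i> * (- of_nat m) * pi) = exp (\<i> * of_nat m * pi)"
proof -
  have "exp (\<i> * of_nat m * pi) = exp (\<i> * pi) ^ m"
    using exp_of_nat_mult[of m "\<i> * pi"] by (simp add: mult_ac)
  moreover have "exp (\<i> * (- of_nat m) * pi) = exp (- (\<i> * pi)) ^ m"
    using exp_of_nat_mult[of m "- (\<i> * pi)"] by (simp add: mult_ac)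
  moreover have "exp (- (\<i> * pi)) = exp (\<i> * pi)"
    by (simp add: exp_minus)
  ultimately show ?thesis by simp
qed

lemma has_vd_tmul:
  assumes "(u has_vector_derivative u') (at t)"
  shows "((\<lambda>t. of_real t * u t :: complex) has_vector_derivative (of_real t * u' + u t)) (at t)"
proof -
  have "((\<lambda>t::real. of_real t :: complex) has_vector_derivative 1) (at t)"
    using has_vector_derivative_of_real[OF DERIV_ident] by simp
  from has_vector_derivative_mult[OF this assms] show ?thesis by simp
qed

lemma main_m:
  fixes K x :: real and m :: nat
  assumes K: "K > 0" and x: "0 < x" "x < pi"
  shows "ssol K ((of_nat m)^2) x (x + pi) \<noteq> 0 \<and>
         vector_derivative (csol K ((of_nat m)^2) x) (at (x + pi)) \<noteq> 0"
proof -
  define k :: complex where "k = of_nat m"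
  define lam where "lam = k^2"
  define a where "a = acoef K k"
  define h where "h = hco K m"
  define A where "A = Aco K m"
  have ea: "entire_c a" unfolding a_def by (rule entire_acoef)
  have eh: "entire_c h" unfolding h_def by (rule entire_hco)
  have eDa: "entire_c (Dc k a)" by (rule entire_Dc[OF ea])
  have eDh: "entire_c (Dc (-k) h)" by (rule entire_Dc[OF eh])
  have A0: "A \<noteq> 0" unfolding A_def using K by (intro Aco_nz) simp
  define u where "u = fl k a"
  define u' where "u' = fl k (Dc k a)"
  have ck: "of_nat (Suc n) + k \<noteq> 0" for n
    unfolding k_def by (simp only: of_nat_add[symmetric] of_nat_eq_0_iff)
  have U: "sol K lam u u'"
    unfolding u_def u'_def lam_def a_def by (rule sol_fl[OF entire_acoef acoef_rec[OF ck]])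
  define v where "v t = A * (of_real t * u t) + fl (-k) h t" for t
  define v' where "v' t = A * (of_real t * u' t + u t) + fl (-k) (Dc (-k) h) t" for t
  have V: "sol K lam v v'"
    unfolding sol_def
  proof
    fix t
    have du: "(u has_vector_derivative u' t) (at t)" "(u' has_vector_derivative (pot K t - lam) * u t) (at t)"
      using U unfolding sol_def by auto
    have res: "fl (-k) (Dc (-k) (Dc (-k) h)) t - (pot K t - (-k)^2) * fl (-k) h t = - fl (-k) (Rc K (-k) h) t"
      by (rule fl_residual[OF eh])
    have "fl (-k) (Rc K (-k) h) t = fl (-k) (\<lambda>n. 2 * A * shk m (Dc k a) n) t"
      unfolding k_def h_def A_def a_def by (rule fl_cong) (rule hco_rec)
    also have "\<dots> = 2 * A * fl (-k) (shk m (Dc k a)) t" by (rule fl_cmult[OF entire_shk[OF eDa]])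
    also have "fl (-k) (shk m (Dc k a)) t = u' t" unfolding k_def u'_def by (rule fl_shk[OF eDa[unfolded k_def]])
    finally have R: "fl (-k) (Rc K (-k) h) t = 2 * A * u' t" .
    have "(v has_vector_derivative v' t) (at t)"
      unfolding v_def[abs_def] v'_def
      by (intro has_vector_derivative_add has_vector_derivative_mult_right has_vd_tmul du fl_deriv eh)
    moreover have "(v' has_vector_derivative
        A * (of_real t * ((pot K t - lam) * u t) + u' t + u' t) + fl (-k) (Dc (-k) (Dc (-k) h)) t) (at t)"
      unfolding v'_def[abs_def]
      by (intro has_vector_derivative_add has_vector_derivative_mult_right has_vd_tmul du fl_deriv eDh)
    moreover have "A * (of_real t * ((pot K t - lam) * u t) + u' t + u' t) + fl (-k) (Dc (-k) (Dc (-k) h)) t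
        = (pot K t - lam) * v t"
      using res R unfolding v_def lam_def by (simp add: algebra_simps)
    ultimately show "(v has_vector_derivative v' t) (at t) \<and>
        (v' has_vector_derivative (pot K t - lam) * v t) (at t)" by simp
  qed
  define \<epsilon> where "\<epsilon> = exp (\<i> * k * pi)"
  have e0: "\<epsilon> \<noteq> 0" unfolding \<epsilon>_def by simp
  have em: "exp (\<i> * (-k) * pi) = \<epsilon>" unfolding \<epsilon>_def k_def by (rule eps_eq)
  have su: "u (t + pi) = \<epsilon> * u t" "u' (t + pi) = \<epsilon> * u' t" for t
    unfolding u_def u'_def \<epsilon>_def by (simp_all add: fl_shift_pi)
  have sv: "v (t + pi) = \<epsilon> * (v t + A * pi * u t)" "v' (t + pi) = \<epsilon> * (v' t + A * pi * u' t)" for t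
    unfolding v_def v'_def using su[of t] fl_shift_pi[of "-k" h t] fl_shift_pi[of "-k" "Dc (-k) h" t] em
    by (simp_all add: algebra_simps)
  define w0 where "w0 = exp (2 * \<i> * of_real x)"
  have w1: "norm w0 = 1" unfolding w0_def by simp
  have wn: "w0 \<noteq> 1"
  proof
    assume "w0 = 1"
    then obtain n :: int where "Im (2 * \<i> * of_real x) = of_int (2 * n) * pi"
      unfolding w0_def exp_eq_1 by blast
    then have xn: "x = of_int n * pi" by simp
    then have "0 < (of_int n :: real)" "(of_int n :: real) < 1" using x by (simp_all add: zero_less_mult_iff)
    then have "(0::int) < n" "n < 1" by simp_all
    then show False by linarith
  qed
  have ux: "u x \<noteq> 0"
  proof
    assume "u x = 0"
    then have "fser a w0 = 0" unfolding u_def fl_def w0_def by simp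
    then show False using bessel_nz[OF K w1 wn] unfolding a_def k_def by blast
  qed
  have u'x: "u' x \<noteq> 0"
  proof
    assume "u' x = 0"
    then have "fser (Dc k a) w0 = 0" unfolding u'_def fl_def w0_def by simp
    then have "\<i> * (k * fser a w0 + 2 * w0 * fser (diffs a) w0) = 0"
      unfolding fser_Dc[OF ea] by (simp add: algebra_simps)
    then have "of_nat m * fser a w0 + 2 * w0 * fser (diffs a) w0 = 0" unfolding k_def by simp
    then show False using bessel_nz[OF K w1 wn] unfolding a_def k_def by blast
  qed
  define W where "W = u x * v' x - u' x * v x"
  have W0: "W \<noteq> 0"
  proof
    assume "W = 0"
    then obtain c where c: "\<And>t. v t = c * u t"
      using sol_dep[OF U V, of x] ux unfolding W_def by blast
    have "\<epsilon> * (v x + A * pi * u x) = \<epsilon> * v x"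
      using sv(1)[of x] c[of "x + pi"] c[of x] su(1)[of x] by simp
    then have "\<epsilon> * (A * pi * u x) = 0" by (simp add: algebra_simps)
    then show False using e0 A0 ux by simp
  qed
  define s where "s t = (- v x / W) * u t + (u x / W) * v t" for t
  define s' where "s' t = (- v x / W) * u' t + (u x / W) * v' t" for t
  define c where "c t = (v' x / W) * u t + (- u' x / W) * v t" for t
  define c' where "c' t = (v' x / W) * u' t + (- u' x / W) * v' t" for t
  have S: "sol K lam s s'" unfolding s_def[abs_def] s'_def[abs_def] by (rule sol_lin[OF U V])
  have C: "sol K lam c c'" unfolding c_def[abs_def] c'_def[abs_def] by (rule sol_lin[OF U V])
  have s0: "s x = 0" unfolding s_def by (simp add: algebra_simps)
  have "s' x = (u x * v' x - u' x * v x) / W" unfolding s'_def by (simp add: diff_divide_distrib mult_ac)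
  then have s1: "s' x = 1" using W0 unfolding W_def by simp
  have "c x = (u x * v' x - u' x * v x) / W" unfolding c_def by (simp add: diff_divide_distrib mult_ac)
  then have c1: "c x = 1" using W0 unfolding W_def by simp
  have c0: "c' x = 0" unfolding c'_def by (simp add: algebra_simps)
  have ss: "ssol K lam x = s" by (rule ssol_eq[OF S s0 s1])
  have cc: "csol K lam x = c" by (rule csol_eq[OF C c1 c0])
  have "s (x + pi) = \<epsilon> * A * pi * (u x)^2 / W"
    unfolding s_def su sv by (simp add: algebra_simps power2_eq_square add_divide_distrib diff_divide_distrib)
  then have D: "s (x + pi) \<noteq> 0" using e0 A0 ux W0 by simp
  have "c' (x + pi) = - (\<epsilon> * A * pi * (u' x)^2 / W)"
    unfolding c'_def su sv by (simp add: algebra_simps power2_eq_square add_divide_distrib diff_divide_distrib)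
  then have N: "c' (x + pi) \<noteq> 0" using e0 A0 u'x W0 by simp
  have "vector_derivative (csol K lam x) (at (x + pi)) = c' (x + pi)"
    unfolding cc by (rule sol_vd[OF C])
  then show ?thesis using D N ss unfolding lam_def k_def by simp
qed

theorem theorem6p7:
  fixes K x :: real
  assumes "K > 0" and "0 < x" and "x < pi"
  shows "(\<forall>mu E. dirichlet_ev K x mu \<and> periodic_ev K E \<longrightarrow> mu \<noteq> E) \<and>
         (\<forall>nu E. neumann_ev K x nu \<and> periodic_ev K E \<longrightarrow> nu \<noteq> E)"
proof -
  have key: "ssol K E x (x + pi) \<noteq> 0 \<and> vector_derivative (csol K E x) (at (x + pi)) \<noteq> 0"
    if P: "periodic_ev K E" for E
  proof -
    obtain k :: int where k: "E = (of_int k)^2" using per_is_square[OF P] by blast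
    have "(of_int k :: complex)^2 = (of_int \<bar>k\<bar>)^2" by (metis of_int_power power2_abs)
    also have "(of_int \<bar>k\<bar> :: complex) = of_nat (nat \<bar>k\<bar>)" by simp
    finally have "E = (of_nat (nat \<bar>k\<bar>))^2" using k by simp
    then show ?thesis using main_m[OF assms, of "nat \<bar>k\<bar>"] by simp
  qed
  show ?thesis unfolding dirichlet_ev_def neumann_ev_def using key by blast
qed

end
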